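(* Let $f$ be a holomorphic self-map of the unit ball $\mathbb{B}^N\subset\mathbb{C}^N$ with $f(0)=0$ that is not unitary on any slice. Fix $r_0\in(0,1)$ and define $M(r)=\max\{\|f(Z)\|:\|Z\|\le r\}$ for $r\in[r_0,1)$. Then there exists $c=c(r_0)<1$ such that $\frac{1-r}{1-M(r)}\le c$ for all $r\in[r_0,1)$.
   Context: A holomorphic map $f:\mathbb{B}^N\to\mathbb{B}^N$ is unitary on a slice if there exist $\zeta,\eta\in\partial\mathbb{B}^N$ with $f(\lambda\zeta)=\lambda\eta$ for all $\lambda$ in the unit disc of $\mathbb{C}$. *)

theory Defs
  imports "HOL-Analysis.Analysis"
begin

definition holomorphic_vec_on :: "(complex^'n \<Rightarrow> complex^'m) \<Rightarrow> (complex^'n) set \<Rightarrow> bool" where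
  "holomorphic_vec_on f S \<longleftrightarrow>
     (\<forall>z\<in>S. \<exists>L. (f has_derivative L) (at z) \<and> (\<forall>c x. L (c *s x) = c *s L x))"

definition unitary_on_slice :: "(complex^'n \<Rightarrow> complex^'n) \<Rightarrow> bool" where
  "unitary_on_slice f \<longleftrightarrow>
     (\<exists>\<zeta> \<eta>. norm \<zeta> = 1 \<and> norm \<eta> = 1 \<and> (\<forall>t::complex. norm t < 1 \<longrightarrow> f (t *s \<zeta>) = t *s \<eta>))"

end

theory Submission imports Defs "HOL-Complex_Analysis.Complex_Analysis" begin


definition cinner :: "complex^'n \<Rightarrow> complex^'n \<Rightarrow> complex" where
  "cinner x y = (\<Sum>i\<in>UNIV. x$i * cnj (y$i))"

lemma Re_cinner: "Re (cinner x y) = inner x y"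
  by (simp add: cinner_def inner_vec_def Re_sum inner_complex_def)

lemma cinner_smult_left: "cinner (c *s x) y = c * cinner x y"
  by (simp add: cinner_def sum_distrib_left mult.assoc)

lemma cinner_smult_right: "cinner x (c *s y) = cnj c * cinner x y"
  by (simp add: cinner_def sum_distrib_left algebra_simps)

lemma cinner_self: "cinner x x = of_real ((norm x)^2)"
proof -
  have "cinner x x = (\<Sum>i\<in>UNIV. complex_of_real ((cmod (x$i))^2))"
    unfolding cinner_def by (rule sum.cong) (simp_all only: complex_norm_square)
  also have "\<dots> = of_real (\<Sum>i\<in>UNIV. (cmod (x$i))^2)" by simp
  also have "(\<Sum>i\<in>UNIV. (cmod (x$i))^2) = (norm x)^2"
    by (simp add: norm_vec_def L2_set_def sum_nonneg)
  finally show ?thesis .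
qed

lemma norm_smult_vec: "norm (c *s (x::complex^'n)) = cmod c * norm x"
  by (simp add: norm_vec_def L2_set_right_distrib norm_mult)

lemma cinner_bound: "cmod (cinner x y) \<le> norm x * norm y"
proof (cases "cinner x y = 0")
  case True then show ?thesis by simp
next
  case False
  define p where "p = cnj (cinner x y) / of_real (cmod (cinner x y))"
  have p1: "cmod p = 1" using False by (simp add: p_def norm_divide)
  have "cinner (p *s x) y = of_real (cmod (cinner x y))"
    using False by (simp add: cinner_smult_left p_def field_simps)
      (metis complex_norm_square of_real_mult power2_eq_square)
  then have "cmod (cinner x y) = inner (p *s x) y"
    by (metis Re_cinner Re_complex_of_real)
  also have "\<dots> \<le> norm (p *s x) * norm y" by (rule norm_cauchy_schwarz)
  also have "\<dots> = norm x * norm y" by (simp add: norm_smult_vec p1)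
  finally show ?thesis .
qed

lemma cinner_add_left: "cinner (x + z) y = cinner x y + cinner z y"
  by (simp add: cinner_def sum.distrib algebra_simps)

lemma bl_cinner: "bounded_linear (\<lambda>x. cinner x w)"
proof (rule bounded_linear_intro[where K="norm w"])
  show "cinner (x + y) w = cinner x w + cinner y w" for x y by (rule cinner_add_left)
  show "cinner (r *\<^sub>R x) w = r *\<^sub>R cinner x w" for r x
  proof -
    have "(r *\<^sub>R x)$i * cnj (w$i) = r *\<^sub>R (x$i * cnj (w$i))" for i
      by (simp only: vector_scaleR_component) (simp add: scaleR_conv_of_real)
    then show ?thesis by (simp add: cinner_def scaleR_sum_right)
  qed
  show "norm (cinner x w) \<le> norm x * norm w" for x by (rule cinner_bound)
qed

lemma bl_smult: "bounded_linear (\<lambda>h::complex. h *s (z::complex^'n))"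
proof (rule bounded_linear_intro[where K="norm z"])
  show "(x + y) *s z = x *s z + y *s z" for x y by (rule vector_sadd_rdistrib)
  show "(r *\<^sub>R x) *s z = r *\<^sub>R (x *s z)" for r x
    by (vector scaleR_conv_of_real)
  show "norm (x *s z) \<le> norm x * norm z" for x by (simp add: norm_smult_vec)
qed



lemma moeb_ident:
  assumes "1 - cnj w * z \<noteq> 0"
  shows "1 - norm (Moebius_function t w z) ^ 2 =
         ((1 - norm w ^ 2) / (norm (1 - cnj w * z) ^ 2)) * (1 - norm z ^ 2)"
proof -
  have VV: "1 - w * cnj z \<noteq> 0"
    using assms by (metis complex_cnj_cnj complex_cnj_mult complex_cnj_one right_minus_eq)
  then show ?thesis using assms
    apply (cases w)
    apply (cases z)
    apply (simp add: Moebius_function_def divide_simps norm_divide norm_mult)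
    apply (simp add: complex_norm complex_diff complex_mult one_complex.code complex_cnj)
    apply (auto simp: algebra_simps power2_eq_square)
    done
qed

lemma scalar_bound:
  fixes g :: "complex \<Rightarrow> complex"
  assumes holg: "g holomorphic_on ball 0 1" and g0: "g 0 = 0"
    and gb: "\<And>z. cmod z < 1 \<Longrightarrow> cmod (g z) < 1"
    and da: "cmod (deriv g 0) \<le> a" and a1: "a < 1" and z: "cmod z < 1"
  shows "cmod (g z) \<le> cmod z * (1 - (1 - a^2) / 8 * (1 - cmod z))"
proof -
  obtain h where holh: "h holomorphic_on ball 0 1"
    and gh: "\<And>z. norm z < 1 \<Longrightarrow> g z = z * h z" and dh: "deriv g 0 = h 0"
    using Schwarz3[OF holg] g0 by metis
  define b where "b = h 0"
  have a0: "0 \<le> a" using da by (meson norm_ge_zero order_trans)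
  have b1: "cmod b \<le> a" using da dh b_def by simp
  have hb: "cmod (h u) < 1" if u: "cmod u < 1" for u
  proof (cases "u = 0")
    case True then show ?thesis using b1 a1 b_def by simp
  next
    case False
    have le: "cmod (g u) \<le> cmod u" using Schwarz_Lemma(1)[OF holg g0 gb u] .
    have "cmod (g u) \<noteq> cmod u"
    proof
      assume eq: "cmod (g u) = cmod u"
      obtain \<alpha> where al: "\<And>z. norm z < 1 \<Longrightarrow> g z = \<alpha> * z" and "norm \<alpha> = 1"
        using Schwarz_Lemma(3)[OF holg g0 gb u] eq u False by blast
      have "((\<lambda>z. \<alpha> * z) has_field_derivative \<alpha>) (at 0)"
        by (auto intro!: derivative_eq_intros)
      then have "(g has_field_derivative \<alpha>) (at 0)"
        by (rule has_field_derivative_transform_within_open[where S="ball 0 1"]) (auto simp: al)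
      then have "deriv g 0 = \<alpha>" by (rule DERIV_imp_deriv)
      then show False using da a1 \<open>norm \<alpha> = 1\<close> by simp
    qed
    then have "cmod (g u) < cmod u" using le by simp
    then have "cmod u * cmod (h u) < cmod u * 1" using gh[OF u] by (simp add: norm_mult)
    then show ?thesis using False by (simp add: mult_less_cancel_left_pos)
  qed
  have bl1: "cmod b < 1" using b1 a1 by simp
  define \<psi> where "\<psi> = (\<lambda>z. Moebius_function 0 b (h z))"
  have sub: "h ` ball 0 1 \<subseteq> ball 0 1" using hb by auto
  have hol\<psi>: "\<psi> holomorphic_on ball 0 1"
    unfolding \<psi>_def
    using sub holomorphic_on_compose_gen[OF holh Moebius_function_holomorphic[OF bl1, of 0]] hb
    by (auto simp: o_def)
  have \<psi>0: "\<psi> 0 = 0" by (simp add: \<psi>_def b_def Moebius_function_eq_zero)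
  have \<psi>b: "cmod (\<psi> u) < 1" if "cmod u < 1" for u
    unfolding \<psi>_def by (rule Moebius_function_norm_lt_1[OF bl1 hb[OF that]])
  have \<psi>z: "cmod (\<psi> z) \<le> cmod z" by (rule Schwarz_Lemma(1)[OF hol\<psi> \<psi>0 \<psi>b z])
  have hz: "h z = Moebius_function 0 (-b) (\<psi> z)"
    unfolding \<psi>_def by (rule Moebius_function_compose[symmetric]) (use bl1 hb z in auto)
  define u where "u = \<psi> z"
  have u1: "cmod u < 1" using \<psi>b z u_def by simp
  have nz: "1 - cnj (-b) * u \<noteq> 0"
  proof
    assume "1 - cnj (-b) * u = 0"
    then have "cmod (cnj (-b) * u) = 1" by (metis eq_iff_diff_eq_0 norm_one)
    moreover have "cmod (cnj (-b) * u) < 1" using norm_mult_less[of "cnj (-b)" 1 u 1] bl1 u1 by simp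
    ultimately show False by simp
  qed
  have den: "cmod (1 - cnj (-b) * u) \<le> 2"
  proof -
    have "cmod (1 - cnj (-b) * u) \<le> 1 + cmod (cnj (-b) * u)" using norm_triangle_ineq4[of 1 "cnj (-b) * u"] by simp
    also have "cmod (cnj (-b) * u) \<le> 1" using bl1 u1 by (simp add: norm_mult mult_le_one)
    finally show ?thesis by simp
  qed
  have den0: "0 < cmod (1 - cnj (-b) * u)" using nz by simp
  have id: "1 - cmod (h z) ^ 2 = ((1 - cmod b ^ 2) / (cmod (1 - cnj (-b) * u) ^ 2)) * (1 - cmod u ^ 2)"
    using moeb_ident[OF nz, of 0] hz u_def by simp
  have A: "(1 - cmod b ^ 2) / (cmod (1 - cnj (-b) * u) ^ 2) \<ge> (1 - a^2) / 4"
  proof -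
    have "1 - a^2 \<le> 1 - cmod b ^ 2" using b1 by (simp add: power_mono)
    moreover have "0 \<le> 1 - a^2" using a0 a1 by (simp add: power_le_one)
    moreover have "cmod (1 - cnj (-b) * u) ^ 2 \<le> 4"
      using den power_mono[OF den, of 2] by simp
    moreover have "0 < cmod (1 - cnj (-b) * u) ^ 2" using den0 by simp
    ultimately show ?thesis
      using frac_le[of "1 - cmod b ^ 2" "1 - a^2" "cmod (1 - cnj (-b) * u) ^ 2" 4]
      by linarith
  qed
  have B: "1 - cmod u ^ 2 \<ge> 1 - cmod z"
  proof -
    have "cmod u \<le> cmod z" using \<psi>z u_def by simp
    then have "cmod u ^ 2 \<le> cmod z" using z
      by (metis norm_ge_zero order_trans power2_eq_square mult_le_one less_imp_le mult_right_le_one_le)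
    then show ?thesis by simp
  qed
  have C: "1 - cmod (h z) ^ 2 \<ge> (1 - a^2) / 4 * (1 - cmod z)"
  proof -
    have "0 \<le> (1 - a^2) / 4" using a0 a1 by (simp add: power_le_one)
    moreover have "0 \<le> 1 - cmod z" using z by simp
    ultimately have "(1 - a^2) / 4 * (1 - cmod z) \<le> ((1 - cmod b ^ 2) / (cmod (1 - cnj (-b) * u) ^ 2)) * (1 - cmod u ^ 2)"
      using mult_mono[OF A B] A by linarith
    then show ?thesis using id by simp
  qed
  have hz1: "cmod (h z) \<le> 1" using hb[OF z] by simp
  have D: "1 - cmod (h z) \<ge> (1 - a^2) / 8 * (1 - cmod z)"
  proof -
    have "1 - cmod (h z) ^ 2 = (1 - cmod (h z)) * (1 + cmod (h z))" by (simp add: power2_eq_square algebra_simps)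
    also have "\<dots> \<le> (1 - cmod (h z)) * 2" using hz1 by (intro mult_left_mono) auto
    finally show ?thesis using C by simp
  qed
  have "cmod (g z) = cmod z * cmod (h z)" using gh[OF z] by (simp add: norm_mult)
  also have "\<dots> \<le> cmod z * (1 - (1 - a^2) / 8 * (1 - cmod z))"
    using D by (intro mult_left_mono) auto
  finally show ?thesis .
qed



lemma slice_deriv:
  fixes f :: "complex^'n \<Rightarrow> complex^'n"
  assumes L: "(f has_derivative L) (at (t *s \<zeta>))" and lin: "\<And>c x. L (c *s x) = c *s L x"
  shows "((\<lambda>t. cinner (f (t *s \<zeta>)) w) has_field_derivative cinner (L \<zeta>) w) (at t)"
proof -
  have d1: "((\<lambda>t. t *s \<zeta>) has_derivative (\<lambda>h. h *s \<zeta>)) (at t)"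
    by (rule bounded_linear_imp_has_derivative[OF bl_smult])
  note d2 = has_derivative_compose[OF d1 L]
  note d3 = bounded_linear.has_derivative[OF bl_cinner[of w] d2]
  have eq: "(\<lambda>h. cinner (L (h *s \<zeta>)) w) = (\<lambda>h. cinner (L \<zeta>) w * h)"
    by (rule ext) (simp add: lin cinner_smult_left)
  show ?thesis using d3 unfolding eq has_field_derivative_def by simp
qed

lemma slice:
  fixes f :: "complex^'n \<Rightarrow> complex^'n"
  assumes hol: "holomorphic_vec_on f (ball 0 1)" and map: "f ` ball 0 1 \<subseteq> ball 0 1"
    and z1: "norm \<zeta> = 1" and w1: "norm w \<le> 1"
    and L0: "(f has_derivative L0) (at 0)" and lin: "\<And>c x. L0 (c *s x) = c *s L0 x"
  shows "(\<lambda>t. cinner (f (t *s \<zeta>)) w) holomorphic_on ball 0 1"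
    and "\<And>t. cmod t < 1 \<Longrightarrow> cmod (cinner (f (t *s \<zeta>)) w) < 1"
    and "deriv (\<lambda>t. cinner (f (t *s \<zeta>)) w) 0 = cinner (L0 \<zeta>) w"
proof -
  have nt: "norm (t *s \<zeta>) = cmod t" for t using z1 by (simp add: norm_smult_vec)
  show "(\<lambda>t. cinner (f (t *s \<zeta>)) w) holomorphic_on ball 0 1"
    unfolding holomorphic_on_def field_differentiable_def
  proof
    fix t :: complex assume "t \<in> ball 0 1"
    then have "t *s \<zeta> \<in> ball 0 1" using nt by simp
    then obtain L where "(f has_derivative L) (at (t *s \<zeta>))" "\<forall>c x. L (c *s x) = c *s L x"
      using hol unfolding holomorphic_vec_on_def by blast
    then have "((\<lambda>t. cinner (f (t *s \<zeta>)) w) has_field_derivative cinner (L \<zeta>) w) (at t)"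
      by (intro slice_deriv) auto
    then show "\<exists>f'. ((\<lambda>t. cinner (f (t *s \<zeta>)) w) has_field_derivative f') (at t within ball 0 1)"
      by (blast intro: has_field_derivative_at_within)
  qed
  show "cmod (cinner (f (t *s \<zeta>)) w) < 1" if "cmod t < 1" for t
  proof -
    have "t *s \<zeta> \<in> ball 0 1" using nt that by simp
    then have "f (t *s \<zeta>) \<in> ball 0 1" using map by blast
    then have "norm (f (t *s \<zeta>)) < 1" by simp
    then have "norm (f (t *s \<zeta>)) * norm w < 1" using w1
      by (metis mult_le_one norm_ge_zero less_le_not_le mult_less_cancel_left1 not_le order.strict_trans1)
    then show ?thesis using cinner_bound[of "f (t *s \<zeta>)" w] by linarith
  qed
  show "deriv (\<lambda>t. cinner (f (t *s \<zeta>)) w) 0 = cinner (L0 \<zeta>) w"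
    by (rule DERIV_imp_deriv, rule slice_deriv) (use L0 lin in auto)
qed



lemma setup_vec:
  fixes Z V :: "complex^'n"
  assumes "Z \<noteq> 0" "V \<noteq> 0"
  obtains \<zeta> w where "norm \<zeta> = 1" "norm w = 1" "complex_of_real (norm Z) *s \<zeta> = Z"
    "cinner V w = of_real (norm V)"
proof
  define \<zeta> where "\<zeta> = complex_of_real (1 / norm Z) *s Z"
  define w where "w = complex_of_real (1 / norm V) *s V"
  show "norm \<zeta> = 1" using assms by (simp add: \<zeta>_def norm_smult_vec norm_divide)
  show "norm w = 1" using assms by (simp add: w_def norm_smult_vec norm_divide)
  show "complex_of_real (norm Z) *s \<zeta> = Z" using assms
    by (simp add: \<zeta>_def vector_smult_assoc)
  have "cinner V w = of_real (1 / norm V) * of_real ((norm V)^2)"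
    by (simp add: w_def cinner_smult_right cinner_self)
  also have "\<dots> = of_real (norm V)" using assms by (simp add: power2_eq_square)
  finally show "cinner V w = of_real (norm V)" .
qed

lemma cinner_zero_left[simp]: "cinner 0 w = 0" by (simp add: cinner_def)

theorem mainTheorem4:
  fixes f :: "complex^'n \<Rightarrow> complex^'n" and r0 :: real
  assumes "holomorphic_vec_on f (ball 0 1)"
    and "f ` ball 0 1 \<subseteq> ball 0 1"
    and "f 0 = 0"
    and "\<not> unitary_on_slice f"
    and "0 < r0" and "r0 < 1"
  shows "\<exists>c<1. \<forall>r\<in>{r0..<1}.
           (1 - r) / (1 - Sup ((\<lambda>Z. norm (f Z)) ` cball 0 r)) \<le> c"
proof -
  note hol = assms(1) and map = assms(2) and f0 = assms(3)
  obtain L0 where L0: "(f has_derivative L0) (at 0)" and lin: "\<And>c x. L0 (c *s x) = c *s L0 x"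
    using hol unfolding holomorphic_vec_on_def by fastforce
  have g0: "cinner (f (t *s \<zeta>)) w = 0" if "t = 0" for t \<zeta> w using that f0 by simp
  have fle: "norm (f Z) \<le> norm Z" if Z: "norm Z < 1" for Z
  proof (cases "Z = 0 \<or> f Z = 0")
    case True then show ?thesis using f0 by auto
  next
    case False
    then obtain \<zeta> w where z1: "norm \<zeta> = 1" and w1: "norm w = 1"
      and tz: "complex_of_real (norm Z) *s \<zeta> = Z" and cw: "cinner (f Z) w = of_real (norm (f Z))"
      using setup_vec by blast
    note sl = slice[OF hol map z1 _ L0 lin, of w]
    have "cmod ((\<lambda>t. cinner (f (t *s \<zeta>)) w) (of_real (norm Z))) \<le> cmod (of_real (norm Z))"
      by (rule Schwarz_Lemma(1)[OF sl(1)]) (use w1 f0 sl(2) Z in auto)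
    then show ?thesis using tz cw by simp
  qed
  have Lless: "norm (L0 \<zeta>) < 1" if z1: "norm \<zeta> = 1" for \<zeta>
  proof (rule ccontr)
    assume "\<not> norm (L0 \<zeta>) < 1"
    then have m1: "norm (L0 \<zeta>) \<ge> 1" by simp
    define m where "m = norm (L0 \<zeta>)"
    define w where "w = complex_of_real (1 / m) *s L0 \<zeta>"
    have mpos: "m > 0" using m1 m_def by linarith
    have w1: "norm w = 1" using mpos by (simp add: w_def norm_smult_vec m_def norm_divide)
    define g where "g = (\<lambda>t. cinner (f (t *s \<zeta>)) w)"
    have w1': "norm w \<le> 1" using w1 by simp
    note sl = slice[OF hol map z1 w1' L0 lin, folded g_def]
    have gz: "g 0 = 0" using f0 by (simp add: g_def)
    have gb: "\<And>t. cmod t < 1 \<Longrightarrow> cmod (g t) < 1" using sl(2) by (simp add: g_def)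
    have dg: "deriv g 0 = of_real m"
    proof -
      have "deriv g 0 = of_real (1 / m) * of_real ((norm (L0 \<zeta>))^2)"
        using sl(3) w1 by (simp add: w_def cinner_smult_right cinner_self)
      also have "\<dots> = of_real m" using mpos by (simp add: m_def power2_eq_square)
      finally show ?thesis .
    qed
    have "cmod (deriv g 0) \<le> 1" by (rule Schwarz_Lemma(2)[OF sl(1) gz gb, of 0]) auto
    then have "m = 1" using dg m1 m_def by simp
    then have "cmod (deriv g 0) = 1" using dg by simp
    then obtain \<alpha> where al: "\<And>z. norm z < 1 \<Longrightarrow> g z = \<alpha> * z" and "norm \<alpha> = 1"
      using Schwarz_Lemma(3)[OF sl(1) gz gb, of 0] by auto
    have "((\<lambda>z. \<alpha> * z) has_field_derivative \<alpha>) (at 0)"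
      by (auto intro!: derivative_eq_intros)
    then have "(g has_field_derivative \<alpha>) (at 0)"
      by (rule has_field_derivative_transform_within_open[where S="ball 0 1"]) (auto simp: al)
    then have "deriv g 0 = \<alpha>" by (rule DERIV_imp_deriv)
    then have "\<alpha> = 1" using dg \<open>m = 1\<close> by simp
    then have gt: "cinner (f (t *s \<zeta>)) w = t" if "cmod t < 1" for t
      using al[OF that] g_def by simp
    have "unitary_on_slice f"
      unfolding unitary_on_slice_def
    proof (intro exI conjI allI impI)
      show "norm \<zeta> = 1" "norm w = 1" by fact+
      fix t :: complex assume t: "cmod t < 1"
      define x where "x = f (t *s \<zeta>)"
      have nt: "norm (t *s \<zeta>) = cmod t" using z1 by (simp add: norm_smult_vec)
      have xn: "norm x \<le> cmod t" using fle[of "t *s \<zeta>"] nt t x_def by simp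
      have "inner x (t *s w) = Re (cnj t * t)"
        using gt[OF t] by (simp add: x_def flip: Re_cinner add: cinner_smult_right)
      also have "\<dots> = (cmod t)^2" by (simp add: complex_norm_square[symmetric] mult.commute)
      finally have ix: "inner x (t *s w) = (cmod t)^2" .
      have ntw: "norm (t *s w) = cmod t" using w1 by (simp add: norm_smult_vec)
      have "(norm (x - t *s w))^2 = (norm x)^2 + (norm (t *s w))^2 - 2 * inner x (t *s w)"
        using dot_norm_neg[of x "t *s w"] by simp
      also have "\<dots> \<le> 0" using ix ntw xn by (simp add: power_mono)
      finally have "norm (x - t *s w) = 0"
        by (metis norm_ge_zero order_antisym zero_le_power2 power_zero_numeral zero_less_power2 not_le)
      then show "f (t *s \<zeta>) = t *s w" by (simp add: x_def)
    qed
    then show False using assms(4) by simp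
  qed
  have bl: "bounded_linear L0" using L0 by (rule has_derivative_bounded_linear)
  have cont: "continuous_on (sphere 0 1) (\<lambda>\<zeta>. norm (L0 \<zeta>))"
    by (intro continuous_on_norm linear_continuous_on bl)
  have ne: "sphere (0::complex^'n) 1 \<noteq> {}"
    by simp
  obtain \<zeta>0 where z0: "\<zeta>0 \<in> sphere 0 1" and z0max: "\<And>\<zeta>. \<zeta> \<in> sphere 0 1 \<Longrightarrow> norm (L0 \<zeta>) \<le> norm (L0 \<zeta>0)"
    using continuous_attains_sup[OF compact_sphere ne cont] by blast
  define a where "a = norm (L0 \<zeta>0)"
  have a1: "a < 1" using Lless z0 a_def by simp
  have a0: "0 \<le> a" by (simp add: a_def)
  have la: "norm (L0 \<zeta>) \<le> a" if "norm \<zeta> = 1" for \<zeta> using z0max that a_def by simp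
  define k where "k = (1 - a^2) / 8"
  have "a*a \<le> a*1" by (rule mult_left_mono) (use a0 a1 in auto)
  then have k0: "0 < k" using a1 by (simp add: k_def power2_eq_square)
  have k1: "k \<le> 1/8" using a0 by (simp add: k_def)
  have fbound: "norm (f Z) \<le> norm Z * (1 - k * (1 - norm Z))" if Z: "norm Z < 1" for Z
  proof (cases "Z = 0 \<or> f Z = 0")
    case True
    have "k * (1 - norm Z) \<le> k" using k0 by (intro mult_left_le) auto
    then have "0 \<le> norm Z * (1 - k * (1 - norm Z))"
      using k1 by (intro mult_nonneg_nonneg) auto
    then show ?thesis using True f0 by auto
  next
    case False
    then obtain \<zeta> w where z1: "norm \<zeta> = 1" and w1: "norm w = 1"
      and tz: "complex_of_real (norm Z) *s \<zeta> = Z" and cw: "cinner (f Z) w = of_real (norm (f Z))"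
      using setup_vec by blast
    have w1': "norm w \<le> 1" using w1 by simp
    define g where "g = (\<lambda>t. cinner (f (t *s \<zeta>)) w)"
    note sl = slice[OF hol map z1 w1' L0 lin, folded g_def]
    have gz: "g 0 = 0" using f0 by (simp add: g_def)
    have gb: "\<And>t. cmod t < 1 \<Longrightarrow> cmod (g t) < 1" using sl(2) by (simp add: g_def)
    have da: "cmod (deriv g 0) \<le> a"
      using sl(3) cinner_bound[of "L0 \<zeta>" w] la[OF z1] w1 by simp
    have "cmod (g (of_real (norm Z))) \<le> cmod (of_real (norm Z)) * (1 - (1 - a^2) / 8 * (1 - cmod (of_real (norm Z))))"
    proof (rule scalar_bound[OF sl(1) gz gb da a1])
      have "cmod (complex_of_real (norm Z)) = norm Z" by simp
      then show "cmod (complex_of_real (norm Z)) < 1" using that by simp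
    qed
    then show ?thesis using tz cw by (simp add: g_def k_def)
  qed
  define c where "c = 1 / (1 + k * r0)"
  have kr0: "0 < k * r0" using k0 assms(5) by simp
  then have c1: "c < 1" by (simp add: c_def)
  show ?thesis
  proof (intro exI conjI ballI)
    show "c < 1" by fact
    fix r assume r: "r \<in> {r0..<1}"
    then have r0r: "r0 \<le> r" and r1: "r < 1" by auto
    have rpos: "0 < r" using r0r assms(5) by simp
    let ?S = "(\<lambda>Z. norm (f Z)) ` cball 0 r"
    have "Sup ?S \<le> r * (1 - k * (1 - r))"
    proof (rule cSup_least)
      show "?S \<noteq> {}" using rpos by auto
      fix y assume "y \<in> ?S"
      then obtain Z where Z: "norm Z \<le> r" and y: "y = norm (f Z)" by auto
      have "y \<le> norm Z * (1 - k * (1 - norm Z))" using fbound[of Z] Z r1 y by simp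
      also have "\<dots> \<le> r * (1 - k * (1 - r))"
      proof -
        have "0 \<le> k * (r + norm Z)" using k0 rpos by simp
        then have "(r - norm Z) * (1 - k + k * (r + norm Z)) \<ge> 0"
          using Z k1 by (intro mult_nonneg_nonneg) auto
        moreover have "r * (1 - k * (1 - r)) - norm Z * (1 - k * (1 - norm Z)) = (r - norm Z) * (1 - k + k * (r + norm Z))"
          by algebra
        ultimately show ?thesis by linarith
      qed
      finally show "y \<le> r * (1 - k * (1 - r))" .
    qed
    then have low: "(1 - r) * (1 + k * r) \<le> 1 - Sup ?S" by (simp add: algebra_simps)
    have kr: "0 < k * r" using k0 rpos by simp
    have pos: "0 < (1 - r) * (1 + k * r)" using r1 kr by (intro mult_pos_pos) auto
    have "(1 - r) / (1 - Sup ?S) \<le> (1 - r) / ((1 - r) * (1 + k * r))"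
      by (rule divide_left_mono[OF low]) (use r1 pos low in auto)
    also have "\<dots> = 1 / (1 + k * r)" using r1 by simp
    also have "\<dots> \<le> c" unfolding c_def
    proof (rule divide_left_mono)
      show "1 + k * r0 \<le> 1 + k * r" using k0 r0r by (simp add: mult_left_mono)
      show "0 < (1 + k * r) * (1 + k * r0)" using kr kr0 by (intro mult_pos_pos) auto
    qed simp
    finally show "(1 - r) / (1 - Sup ?S) \<le> c" .
  qed
qed

end
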